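(* Let $\mathbf{A}$ be a finite nilpotent algebra with a Mal'cev term, let $0\in A$, and let $\cdot$ and $\backslash$ be the loop multiplication and left division associated with $0$ (see context). Let $f(x_1,\ldots,x_m)\in\operatorname{Pol}_m(\mathbf{A})$, let $a_1,\ldots,a_N$ be an enumeration of the elements of $A$, and let $\bar b\in A^m$. Define $r_0(x_1,\ldots,x_m)=f(0,\ldots,0)$ (a constant), and recursively for $0\le k<m$: $$t_S(\bar x_{\restriction S})=\Big(\prod_{i=0}^{k} r_i(\bar x_S)\Big)\backslash f(\bar x_S)\quad\text{for } S\in\tbinom{[m]}{k+1},$$ $$r_{k+1}(x_1,\ldots,x_m)=\prod_{i=1}^{N}\ \prod_{\substack{S\in\binom{[m]}{k+1}\\ t_S(\bar b_{\restriction S})=a_i}} t_S(\bar x_{\restriction S}),$$ where the inner product is taken in an arbitrary fixed order of the sets $S$ (and $t_\emptyset:=0$). Then: (1) for every $S\subseteq[m]$, the $|S|$-ary polynomial $t_S$ is $0$-absorbing; (2) for every $S\subseteq[m]$ with $|S|=k$, $f(\bar x_S)=\prod_{i=0}^{k} r_i(\bar x_S)$ for all values of the variables; in particular $f(x_1,\ldots,x_m)=\prod_{i=0}^{m} r_i(x_1,\ldots,x_m)$ for all $x_1,\ldots,x_m\in A$; (3) if $n$ is a positive integer such that for every $k\ge n$ every $0$-absorbing $k$-ary polynomial of $\mathbf{A}$ is the constant function $0$ (which holds when $\mathbf{A}$ is supernilpotent of the appropriate degree $n$), then $r_k$ is the constant function $0$ for every $k\ge n$.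
   Context: A polynomial of an algebra $\mathbf{A}$ is a term built from variables and constants from $A$ using the basic operations of $\mathbf{A}$; $\operatorname{Pol}_m(\mathbf{A})$ denotes the $m$-ary polynomial operations. A Mal'cev term $m$ satisfies $m(y,x,x)=m(x,x,y)=y$. Nilpotency refers to the term-condition (commutator-theoretic) notion. It is a known fact that for a nilpotent algebra with Mal'cev term $m$ and any $0\in A$, $x\cdot y:=m(x,0,y)$ is a loop multiplication with neutral element $0$ (every equation $x\cdot z=y$ and $z\cdot x=y$ has a unique solution $z$), and the left division $x\backslash y$ (the unique $z$ with $x\cdot z=y$) and right division $y/x$ (the unique $z$ with $z\cdot x=y$) are polynomial operations of $\mathbf{A}$. $\prod_{i=1}^n x_i$ denotes the left-associated product $(\cdots((x_1\cdot x_2)\cdot x_3)\cdots)\cdot x_n$. $[m]=\{1,\ldots,m\}$, $\binom{[m]}{k}=\{S\subseteq[m]:|S|=k\}$. For $\bar x=(x_1,\ldots,x_m)$ and $S\subseteq[m]$, $\bar x_S$ is the $m$-tuple whose $i$-th entry is $x_i$ if $i\in S$ and $0$ otherwise, and $\bar x_{\restriction S}$ is the $|S|$-tuple $(x_i)_{i\in S}$. A polynomial $g(x_1,\ldots,x_k)$ is $0$-absorbing if $g(y_1,\ldots,y_k)=0$ whenever $y_i=0$ for some $i$. *)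

theory Defs
  imports Main
begin

definition algebra :: "'a set \<Rightarrow> (nat \<times> ('a list \<Rightarrow> 'a)) set \<Rightarrow> bool" where
  "algebra A F \<longleftrightarrow> A \<noteq> {} \<and>
     (\<forall>(n, g) \<in> F. \<forall>xs. length xs = n \<longrightarrow> set xs \<subseteq> A \<longrightarrow> g xs \<in> A)"

inductive_set clo :: "(nat \<times> ('a list \<Rightarrow> 'a)) set \<Rightarrow> nat \<Rightarrow> ('a list \<Rightarrow> 'a) set"
  for F k where
  proj: "i < k \<Longrightarrow> (\<lambda>xs. xs ! i) \<in> clo F k"
| app: "(n, g) \<in> F \<Longrightarrow> length ts = n \<Longrightarrow> (\<forall>t \<in> set ts. t \<in> clo F k)
          \<Longrightarrow> (\<lambda>xs. g (map (\<lambda>t. t xs) ts)) \<in> clo F k"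

inductive_set pol :: "'a set \<Rightarrow> (nat \<times> ('a list \<Rightarrow> 'a)) set \<Rightarrow> nat \<Rightarrow> ('a list \<Rightarrow> 'a) set"
  for A F k where
  proj: "i < k \<Longrightarrow> (\<lambda>xs. xs ! i) \<in> pol A F k"
| const: "c \<in> A \<Longrightarrow> (\<lambda>xs. c) \<in> pol A F k"
| app: "(n, g) \<in> F \<Longrightarrow> length ts = n \<Longrightarrow> (\<forall>t \<in> set ts. t \<in> pol A F k)
          \<Longrightarrow> (\<lambda>xs. g (map (\<lambda>t. t xs) ts)) \<in> pol A F k"

definition is_term_op :: "'a set \<Rightarrow> (nat \<times> ('a list \<Rightarrow> 'a)) set \<Rightarrow> nat \<Rightarrow> ('a list \<Rightarrow> 'a) \<Rightarrow> bool" where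
  "is_term_op A F k g \<longleftrightarrow>
     (\<exists>t \<in> clo F k. \<forall>xs. length xs = k \<longrightarrow> set xs \<subseteq> A \<longrightarrow> g xs = t xs)"

definition is_pol :: "'a set \<Rightarrow> (nat \<times> ('a list \<Rightarrow> 'a)) set \<Rightarrow> nat \<Rightarrow> ('a list \<Rightarrow> 'a) \<Rightarrow> bool" where
  "is_pol A F k g \<longleftrightarrow>
     (\<exists>t \<in> pol A F k. \<forall>xs. length xs = k \<longrightarrow> set xs \<subseteq> A \<longrightarrow> g xs = t xs)"

definition congruence :: "'a set \<Rightarrow> (nat \<times> ('a list \<Rightarrow> 'a)) set \<Rightarrow> ('a \<times> 'a) set \<Rightarrow> bool" where
  "congruence A F \<theta> \<longleftrightarrow> equiv A \<theta> \<and>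
     (\<forall>(n, g) \<in> F. \<forall>xs ys. length xs = n \<longrightarrow> length ys = n \<longrightarrow>
        list_all2 (\<lambda>x y. (x, y) \<in> \<theta>) xs ys \<longrightarrow> (g xs, g ys) \<in> \<theta>)"

definition centralizes ::
  "'a set \<Rightarrow> (nat \<times> ('a list \<Rightarrow> 'a)) set \<Rightarrow> ('a \<times> 'a) set \<Rightarrow> ('a \<times> 'a) set \<Rightarrow> ('a \<times> 'a) set \<Rightarrow> bool" where
  "centralizes A F \<alpha> \<beta> \<delta> \<longleftrightarrow>
     (\<forall>p q t as bs cs ds. t \<in> clo F (p + q) \<longrightarrow>
        length as = p \<longrightarrow> length bs = p \<longrightarrow> length cs = q \<longrightarrow> length ds = q \<longrightarrow>
        list_all2 (\<lambda>x y. (x, y) \<in> \<alpha>) as bs \<longrightarrow>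
        list_all2 (\<lambda>x y. (x, y) \<in> \<beta>) cs ds \<longrightarrow>
        (t (as @ cs), t (as @ ds)) \<in> \<delta> \<longrightarrow> (t (bs @ cs), t (bs @ ds)) \<in> \<delta>)"

definition commutator ::
  "'a set \<Rightarrow> (nat \<times> ('a list \<Rightarrow> 'a)) set \<Rightarrow> ('a \<times> 'a) set \<Rightarrow> ('a \<times> 'a) set \<Rightarrow> ('a \<times> 'a) set" where
  "commutator A F \<alpha> \<beta> = \<Inter>{\<delta>. congruence A F \<delta> \<and> centralizes A F \<alpha> \<beta> \<delta>}"

fun lower_central :: "'a set \<Rightarrow> (nat \<times> ('a list \<Rightarrow> 'a)) set \<Rightarrow> nat \<Rightarrow> ('a \<times> 'a) set" where
  "lower_central A F 0 = A \<times> A"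
| "lower_central A F (Suc n) = commutator A F (A \<times> A) (lower_central A F n)"

definition nilpotent :: "'a set \<Rightarrow> (nat \<times> ('a list \<Rightarrow> 'a)) set \<Rightarrow> bool" where
  "nilpotent A F \<longleftrightarrow> (\<exists>n. lower_central A F n = Id_on A)"

definition malcev_term :: "'a set \<Rightarrow> (nat \<times> ('a list \<Rightarrow> 'a)) set \<Rightarrow> ('a list \<Rightarrow> 'a) \<Rightarrow> bool" where
  "malcev_term A F mal \<longleftrightarrow> is_term_op A F 3 mal \<and>
     (\<forall>x \<in> A. \<forall>y \<in> A. mal [y, x, x] = y \<and> mal [x, x, y] = y)"

section \<open>Loop operations associated with 0 (written e)\<close>

definition lmul :: "('a list \<Rightarrow> 'a) \<Rightarrow> 'a \<Rightarrow> 'a \<Rightarrow> 'a \<Rightarrow> 'a" where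
  "lmul mal e x y = mal [x, e, y]"

definition ldiv :: "'a set \<Rightarrow> ('a list \<Rightarrow> 'a) \<Rightarrow> 'a \<Rightarrow> 'a \<Rightarrow> 'a \<Rightarrow> 'a" where
  "ldiv A mal e x y = (THE z. z \<in> A \<and> lmul mal e x z = y)"

definition prodL :: "('a list \<Rightarrow> 'a) \<Rightarrow> 'a \<Rightarrow> 'a list \<Rightarrow> 'a" where
  "prodL mal e xs = foldl (lmul mal e) e xs"

definition zero_absorbing :: "'a set \<Rightarrow> 'a \<Rightarrow> nat \<Rightarrow> ('a list \<Rightarrow> 'a) \<Rightarrow> bool" where
  "zero_absorbing A e k g \<longleftrightarrow>
     (\<forall>ys. length ys = k \<longrightarrow> set ys \<subseteq> A \<longrightarrow> e \<in> set ys \<longrightarrow> g ys = e)"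

section \<open>Tuples: indices are 0,...,m-1\<close>

definition sub0 :: "nat \<Rightarrow> 'a \<Rightarrow> nat set \<Rightarrow> 'a list \<Rightarrow> 'a list" where
  "sub0 m e S xs = map (\<lambda>i. if i \<in> S then xs ! i else e) [0..<m]"

definition restr :: "nat set \<Rightarrow> 'a list \<Rightarrow> 'a list" where
  "restr S xs = map (\<lambda>i. xs ! i) (sorted_list_of_set S)"

definition spread :: "nat \<Rightarrow> 'a \<Rightarrow> nat set \<Rightarrow> 'a list \<Rightarrow> 'a list" where
  "spread m e S ys = map (\<lambda>i. if i \<in> S then ys ! card {j \<in> S. j < i} else e) [0..<m]"

text \<open>t_S as |S|-ary function, given the list rs = [r_0, ..., r_k] (|S| = k+1).\<close>
definition tfun :: "'a set \<Rightarrow> ('a list \<Rightarrow> 'a) \<Rightarrow> 'a \<Rightarrow> ('a list \<Rightarrow> 'a) \<Rightarrow> nat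
     \<Rightarrow> ('a list \<Rightarrow> 'a) list \<Rightarrow> nat set \<Rightarrow> 'a list \<Rightarrow> 'a" where
  "tfun A mal e f m rs S ys =
     ldiv A mal e (prodL mal e (map (\<lambda>r. r (spread m e S ys)) rs)) (f (spread m e S ys))"

text \<open>rlist ... k = [r_0, ..., r_k]. ordS k is the fixed enumeration of the (k+1)-subsets;
as is the enumeration a_1..a_N of A; b is the tuple b-bar.\<close>
primrec rlist :: "'a set \<Rightarrow> ('a list \<Rightarrow> 'a) \<Rightarrow> 'a \<Rightarrow> ('a list \<Rightarrow> 'a) \<Rightarrow> nat \<Rightarrow> 'a list
     \<Rightarrow> 'a list \<Rightarrow> (nat \<Rightarrow> nat set list) \<Rightarrow> nat \<Rightarrow> ('a list \<Rightarrow> 'a) list" where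
  "rlist A mal e f m as b ordS 0 = [\<lambda>xs. f (replicate m e)]"
| "rlist A mal e f m as b ordS (Suc k) =
     (let rs = rlist A mal e f m as b ordS k in
      rs @ [\<lambda>xs. prodL mal e
               (map (\<lambda>a. prodL mal e
                   (map (\<lambda>S. tfun A mal e f m rs S (restr S xs))
                      (filter (\<lambda>S. tfun A mal e f m rs S (restr S b) = a) (ordS k))))
                 as)])"

definition rr :: "'a set \<Rightarrow> ('a list \<Rightarrow> 'a) \<Rightarrow> 'a \<Rightarrow> ('a list \<Rightarrow> 'a) \<Rightarrow> nat \<Rightarrow> 'a list
     \<Rightarrow> 'a list \<Rightarrow> (nat \<Rightarrow> nat set list) \<Rightarrow> nat \<Rightarrow> 'a list \<Rightarrow> 'a" where
  "rr A mal e f m as b ordS k = rlist A mal e f m as b ordS k ! k"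

definition tt :: "'a set \<Rightarrow> ('a list \<Rightarrow> 'a) \<Rightarrow> 'a \<Rightarrow> ('a list \<Rightarrow> 'a) \<Rightarrow> nat \<Rightarrow> 'a list
     \<Rightarrow> 'a list \<Rightarrow> (nat \<Rightarrow> nat set list) \<Rightarrow> nat set \<Rightarrow> 'a list \<Rightarrow> 'a" where
  "tt A mal e f m as b ordS S =
     (if S = {} then (\<lambda>ys. e)
      else tfun A mal e f m (rlist A mal e f m as b ordS (card S - 1)) S)"

end

theory Submission
  imports Defs "HOL-Combinatorics.Cycles"
begin

lemma alg_op:
  assumes "algebra A F" "(n, g) \<in> F" "length xs = n" "set xs \<subseteq> A"
  shows "g xs \<in> A"
proof -
  have "(\<lambda>(n, g). \<forall>xs. length xs = n \<longrightarrow> set xs \<subseteq> A \<longrightarrow> g xs \<in> A) (n, g)"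
    using assms(1,2) unfolding algebra_def by blast
  then show ?thesis using assms(3,4) by simp
qed

lemma pol_in_A:
  assumes alg: "algebra A F"
  shows "t \<in> pol A F k \<Longrightarrow> length xs = k \<Longrightarrow> set xs \<subseteq> A \<Longrightarrow> t xs \<in> A"
proof (induction t rule: pol.induct)
  case (proj i) then show ?case by auto
next
  case (const c) then show ?case by auto
next
  case (app n g ts)
  have "set (map (\<lambda>t. t xs) ts) \<subseteq> A" using app by auto
  then show ?case using alg_op[OF alg app(1)] app(2) by simp
qed

lemma clo_in_A:
  assumes alg: "algebra A F"
  shows "t \<in> clo F k \<Longrightarrow> length xs = k \<Longrightarrow> set xs \<subseteq> A \<Longrightarrow> t xs \<in> A"
proof (induction t rule: clo.induct)
  case (proj i) then show ?case by auto
next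
  case (app n g ts)
  have "set (map (\<lambda>t. t xs) ts) \<subseteq> A" using app by auto
  then show ?case using alg_op[OF alg app(1)] app(2) by simp
qed

lemma pol_subst:
  assumes "t \<in> pol A F n"
  shows "length ps = n \<Longrightarrow> \<forall>p\<in>set ps. p \<in> pol A F k \<Longrightarrow> (\<lambda>xs. t (map (\<lambda>p. p xs) ps)) \<in> pol A F k"
  using assms
proof (induction t rule: pol.induct)
  case (proj i)
  then have "ps ! i \<in> pol A F k" by auto
  moreover have "(\<lambda>xs. map (\<lambda>p. p xs) ps ! i) = ps ! i" using proj by auto
  ultimately show ?case by simp
next
  case (const c) then show ?case by (simp add: pol.const)
next
  case (app n' g ts)
  have "(\<lambda>xs. g (map (\<lambda>t. t xs) (map (\<lambda>t xs. t (map (\<lambda>p. p xs) ps)) ts))) \<in> pol A F k"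
    by (rule pol.app) (use app in auto)
  then show ?case by (simp add: comp_def)
qed

lemma clo_pol: "t \<in> clo F k \<Longrightarrow> t \<in> pol A F k"
  by (induction t rule: clo.induct) (auto intro: pol.intros)

lemma is_pol_in_A:
  assumes "algebra A F" "is_pol A F k p" "length xs = k" "set xs \<subseteq> A"
  shows "p xs \<in> A"
  using assms pol_in_A unfolding is_pol_def by metis

lemma is_pol_cong:
  assumes "is_pol A F k p" "\<And>xs. length xs = k \<Longrightarrow> set xs \<subseteq> A \<Longrightarrow> q xs = p xs"
  shows "is_pol A F k q"
  using assms unfolding is_pol_def by metis

lemma is_pol_proj: "i < k \<Longrightarrow> is_pol A F k (\<lambda>xs. xs ! i)"
  unfolding is_pol_def by (rule bexI[OF _ pol.proj]) auto

lemma is_pol_const: "c \<in> A \<Longrightarrow> is_pol A F k (\<lambda>xs. c)"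
  unfolding is_pol_def by (rule bexI[OF _ pol.const]) auto

lemma is_pol_compose:
  assumes alg: "algebra A F" and g: "is_pol A F n g" and len: "length ps = n"
    and ps: "\<forall>p\<in>set ps. is_pol A F k p"
  shows "is_pol A F k (\<lambda>xs. g (map (\<lambda>p. p xs) ps))"
proof -
  obtain t where t: "t \<in> pol A F n" "\<forall>xs. length xs = n \<longrightarrow> set xs \<subseteq> A \<longrightarrow> g xs = t xs"
    using g unfolding is_pol_def by blast
  define Q where "Q p = (SOME q. q \<in> pol A F k \<and> (\<forall>xs. length xs = k \<longrightarrow> set xs \<subseteq> A \<longrightarrow> p xs = q xs))" for p
  have Q: "Q p \<in> pol A F k \<and> (\<forall>xs. length xs = k \<longrightarrow> set xs \<subseteq> A \<longrightarrow> p xs = Q p xs)" if "p \<in> set ps" for p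
  proof -
    have "\<exists>q. q \<in> pol A F k \<and> (\<forall>xs. length xs = k \<longrightarrow> set xs \<subseteq> A \<longrightarrow> p xs = q xs)"
      using ps that unfolding is_pol_def by blast
    from someI_ex[OF this] show ?thesis unfolding Q_def .
  qed
  have "(\<lambda>xs. t (map (\<lambda>q. q xs) (map Q ps))) \<in> pol A F k"
    by (rule pol_subst[OF t(1)]) (use len Q in auto)
  moreover have "g (map (\<lambda>p. p xs) ps) = t (map (\<lambda>q. q xs) (map Q ps))"
    if "length xs = k" "set xs \<subseteq> A" for xs
  proof -
    have e: "map (\<lambda>p. p xs) ps = map (\<lambda>q. q xs) (map Q ps)" using Q that by auto
    have "\<forall>p\<in>set ps. p xs \<in> A" using is_pol_in_A[OF alg _ that] ps by blast
    then have "set (map (\<lambda>p. p xs) ps) \<subseteq> A" by auto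
    then have "g (map (\<lambda>p. p xs) ps) = t (map (\<lambda>p. p xs) ps)" using t(2) len by auto
    also have "\<dots> = t (map (\<lambda>q. q xs) (map Q ps))" using e by (rule arg_cong)
    finally show ?thesis .
  qed
  ultimately show ?thesis unfolding is_pol_def by (intro bexI[where x="\<lambda>xs. t (map (\<lambda>q. q xs) (map Q ps))"]) auto
qed

lemma comm_props:
  assumes alg: "algebra A F" and beta: "\<beta> \<subseteq> A \<times> A"
  shows "commutator A F (A \<times> A) \<beta> \<subseteq> A \<times> A"
    "Id_on A \<subseteq> commutator A F (A \<times> A) \<beta>"
    "centralizes A F (A \<times> A) \<beta> (commutator A F (A \<times> A) \<beta>)"
proof -
  let ?D = "{\<delta>. congruence A F \<delta> \<and> centralizes A F (A \<times> A) \<beta> \<delta>}"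
  have opA: "g xs \<in> A" if "(n, g) \<in> F" "length xs = n" "set xs \<subseteq> A" for n g xs
    using alg that unfolding algebra_def by fastforce
  have la: "set xs \<subseteq> A \<and> set ys \<subseteq> A" if "list_all2 (\<lambda>x y. (x, y) \<in> A \<times> A) xs ys" for xs ys
    using that by (auto simp: list_all2_conv_all_nth in_set_conv_nth)
  have cong: "congruence A F (A \<times> A)"
    unfolding congruence_def case_prod_beta
  proof (intro conjI ballI allI impI)
    show "equiv A (A \<times> A)" by (auto simp: equiv_def refl_on_def sym_def trans_def)
    fix ng xs ys assume "ng \<in> F" "length xs = fst ng" "length ys = fst ng"
      "list_all2 (\<lambda>x y. (x, y) \<in> A \<times> A) xs ys"
    then show "(snd ng xs, snd ng ys) \<in> A \<times> A" using opA[of "fst ng" "snd ng"] la by auto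
  qed
  have cen: "centralizes A F (A \<times> A) \<beta> (A \<times> A)"
    unfolding centralizes_def
  proof (intro allI impI)
    fix p q t as bs cs ds
    assume t: "t \<in> clo F (p + q)" and "length as = p" and l: "length bs = p" "length cs = q" "length ds = q"
      and r1: "list_all2 (\<lambda>x y. (x, y) \<in> A \<times> A) as bs"
      and r2: "list_all2 (\<lambda>x y. (x, y) \<in> \<beta>) cs ds"
      and "(t (as @ cs), t (as @ ds)) \<in> A \<times> A"
    have "set bs \<subseteq> A" using r1 by (auto simp: list_all2_conv_all_nth in_set_conv_nth)
    moreover have "\<forall>i<length ds. cs ! i \<in> A \<and> ds ! i \<in> A" using r2 beta
      unfolding list_all2_conv_all_nth by (metis mem_Sigma_iff subsetD)
    then have "set cs \<subseteq> A \<and> set ds \<subseteq> A" using r2 unfolding list_all2_conv_all_nth by (auto simp: in_set_conv_nth)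
    ultimately show "(t (bs @ cs), t (bs @ ds)) \<in> A \<times> A"
      using clo_in_A[OF alg t] l by auto
  qed
  have AA: "A \<times> A \<in> ?D" using cong cen by blast
  show "commutator A F (A \<times> A) \<beta> \<subseteq> A \<times> A"
    unfolding commutator_def using AA by blast
  show "Id_on A \<subseteq> commutator A F (A \<times> A) \<beta>"
    unfolding commutator_def congruence_def equiv_def refl_on_def by auto
  show "centralizes A F (A \<times> A) \<beta> (commutator A F (A \<times> A) \<beta>)"
    unfolding commutator_def centralizes_def by blast
qed

lemma lc_sub:
  assumes alg: "algebra A F"
  shows "lower_central A F i \<subseteq> A \<times> A"
proof (induction i)
  case 0 then show ?case by simp
next
  case (Suc i) then show ?case using comm_props(1)[OF alg] by simp
qed


lemma idx_card:
  assumes fS: "finite S" and p: "p < card S"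
  shows "card {j \<in> S. j < sorted_list_of_set S ! p} = p"
proof -
  let ?L = "sorted_list_of_set S"
  have sL: "sorted_wrt (<) ?L" by (simp add: strict_sorted_list_of_set)
  have lL: "length ?L = card S" by simp
  have dL: "distinct ?L" by simp
  have setL: "set ?L = S" using fS by simp
  have "{j \<in> S. j < ?L ! p} = set (take p ?L)"
  proof (rule set_eqI, rule iffI)
    fix j assume "j \<in> {j \<in> S. j < ?L ! p}"
    then have jS: "j \<in> S" "j < ?L ! p" by auto
    have "j \<in> set ?L" using jS setL by simp
    then obtain q where q0: "q < length ?L" "?L ! q = j" unfolding in_set_conv_nth by blast
    note q = q0 jS(2)
    have "q < p"
    proof (rule ccontr)
      assume "\<not> q < p"
      then have "p = q \<or> p < q" by auto
      then show False using sorted_wrt_nth_less[OF sL, of p q] q by auto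
    qed
    then have "q < length (take p ?L)" "take p ?L ! q = j" using q p lL by auto
    then show "j \<in> set (take p ?L)" by (metis nth_mem)
  next
    fix j assume "j \<in> set (take p ?L)"
    then obtain q where q1: "q < length (take p ?L)" "take p ?L ! q = j" unfolding in_set_conv_nth by blast
    then have q: "q < p" "?L ! q = j" using p lL by auto
    have "?L ! q \<in> S" using q p lL setL by (metis less_trans nth_mem)
    moreover have "?L ! q < ?L ! p" using sorted_wrt_nth_less[OF sL, of q p] p lL q by simp
    ultimately show "j \<in> {j \<in> S. j < ?L ! p}" using q by simp
  qed
  then show ?thesis using dL p lL by (simp add: distinct_card)
qed

lemma idx_inv:
  assumes fS: "finite S" and i: "i \<in> S"
  shows "card {j \<in> S. j < i} < card S \<and> sorted_list_of_set S ! card {j \<in> S. j < i} = i"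
proof -
  obtain p where p: "p < length (sorted_list_of_set S)" "sorted_list_of_set S ! p = i"
    using i fS by (metis in_set_conv_nth set_sorted_list_of_set)
  then show ?thesis using idx_card[OF fS, of p] by simp
qed

lemma fin_sub: assumes "S \<subseteq> {0..<(m::nat)}" shows "finite S"
  using finite_subset[OF assms finite_atLeastLessThan] .

lemma length_restr[simp]: "length (restr S xs) = card S"
  unfolding restr_def by simp

lemma set_restr: "finite S \<Longrightarrow> set (restr S xs) = (\<lambda>i. xs ! i) ` S"
  unfolding restr_def by simp

lemma length_sub0[simp]: "length (sub0 m e S xs) = m"
  unfolding sub0_def by simp

lemma length_spread[simp]: "length (spread m e S ys) = m"
  unfolding spread_def by simp

lemma nth_sub0: "i < m \<Longrightarrow> sub0 m e S xs ! i = (if i \<in> S then xs ! i else e)"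
  unfolding sub0_def by simp

lemma nth_spread: "i < m \<Longrightarrow> spread m e S ys ! i = (if i \<in> S then ys ! card {j \<in> S. j < i} else e)"
  unfolding spread_def by simp

lemma spread_restr:
  assumes S: "S \<subseteq> {0..<m}"
  shows "spread m e S (restr S xs) = sub0 m e S xs"
proof (rule nth_equalityI)
  fix i assume "i < length (spread m e S (restr S xs))"
  then have i: "i < m" by simp
  show "spread m e S (restr S xs) ! i = sub0 m e S xs ! i"
  proof (cases "i \<in> S")
    case True
    let ?c = "card {j \<in> S. j < i}"
    have c: "?c < card S" "sorted_list_of_set S ! ?c = i" using idx_inv[OF fin_sub[OF S] True] by blast+
    have "restr S xs ! ?c = xs ! (sorted_list_of_set S ! ?c)" unfolding restr_def
      using c(1) by (simp only: nth_map length_sorted_list_of_set)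
    also have "\<dots> = xs ! i" using c(2) by (simp only:)
    finally have r: "restr S xs ! ?c = xs ! i" .
    have "spread m e S (restr S xs) ! i = restr S xs ! ?c" using True i by (simp only: nth_spread if_True)
    also have "\<dots> = sub0 m e S xs ! i" using True i r by (simp only: nth_sub0 if_True)
    finally show ?thesis .
  next
    case False
    then show ?thesis using i by (simp only: nth_spread nth_sub0 if_False)
  qed
qed (simp only: length_spread length_sub0)

lemma restr_spread:
  assumes S: "S \<subseteq> {0..<m}" and l: "length ys = card S"
  shows "restr S (spread m e S ys) = ys"
proof (rule nth_equalityI)
  show "length (restr S (spread m e S ys)) = length ys" using l by simp
  fix p assume "p < length (restr S (spread m e S ys))"
  then have p: "p < card S" by simp
  let ?i = "sorted_list_of_set S ! p"
  have iS: "?i \<in> S" using p fin_sub[OF S] by (metis length_sorted_list_of_set nth_mem set_sorted_list_of_set)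
  then have im: "?i < m" using S by auto
  show "restr S (spread m e S ys) ! p = ys ! p"
    using p im iS idx_card[OF fin_sub[OF S] p] by (simp add: restr_def nth_spread)
qed

lemma sub0_sub0: "length xs = m \<Longrightarrow> sub0 m e S' (sub0 m e S xs) = sub0 m e (S' \<inter> S) xs"
  by (rule nth_equalityI) (auto simp: nth_sub0)

lemma sub0_full: "length xs = m \<Longrightarrow> sub0 m e {0..<m} xs = xs"
  by (rule nth_equalityI) (auto simp: nth_sub0)

lemma set_sub0: "set xs \<subseteq> A \<Longrightarrow> length xs = m \<Longrightarrow> e \<in> A \<Longrightarrow> set (sub0 m e S xs) \<subseteq> A"
  unfolding sub0_def by (auto simp: set_conv_nth)

lemma set_spread: "set ys \<subseteq> A \<Longrightarrow> length ys = card S \<Longrightarrow> finite S \<Longrightarrow> e \<in> A \<Longrightarrow> set (spread m e S ys) \<subseteq> A"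
  unfolding spread_def using idx_inv by (fastforce simp: set_conv_nth)

locale nilp =
  fixes A :: "'a set" and F :: "(nat \<times> ('a list \<Rightarrow> 'a)) set" and mal :: "'a list \<Rightarrow> 'a" and e :: 'a
  assumes alg: "algebra A F" and fin: "finite A" and nil: "nilpotent A F"
    and mc: "malcev_term A F mal" and eA: "e \<in> A"
begin

lemma mal_term: obtains t0 where "t0 \<in> clo F 3" "\<And>xs. length xs = 3 \<Longrightarrow> set xs \<subseteq> A \<Longrightarrow> mal xs = t0 xs"
  using mc unfolding malcev_term_def is_term_op_def by blast

lemma mal_pol: "is_pol A F 3 mal"
  using mc clo_pol unfolding malcev_term_def is_term_op_def is_pol_def by blast

lemma mal_in: "x \<in> A \<Longrightarrow> y \<in> A \<Longrightarrow> z \<in> A \<Longrightarrow> mal [x, y, z] \<in> A"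
  using is_pol_in_A[OF alg mal_pol, of "[x,y,z]"] by auto

lemma lm_in: "x \<in> A \<Longrightarrow> y \<in> A \<Longrightarrow> lmul mal e x y \<in> A"
  unfolding lmul_def using mal_in eA by blast

lemma lm_e_r: "x \<in> A \<Longrightarrow> lmul mal e x e = x"
  unfolding lmul_def using mc eA unfolding malcev_term_def by blast

lemma lm_e_l: "y \<in> A \<Longrightarrow> lmul mal e e y = y"
  unfolding lmul_def using mc eA unfolding malcev_term_def by blast

lemma lm_inj:
  assumes xA: "x \<in> A" and yA: "y \<in> A" and y'A: "y' \<in> A" and eq: "lmul mal e x y = lmul mal e x y'"
  shows "y = y'"
proof -
  obtain t0 where t0: "t0 \<in> clo F 3" "\<And>xs. length xs = 3 \<Longrightarrow> set xs \<subseteq> A \<Longrightarrow> mal xs = t0 xs"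
    using mal_term by blast
  have all: "(y, y') \<in> lower_central A F i" for i
  proof (induction i)
    case 0 then show ?case using yA y'A by simp
  next
    case (Suc i)
    let ?C = "lower_central A F (Suc i)"
    have C: "?C = commutator A F (A \<times> A) (lower_central A F i)" by simp
    note cp = comm_props[OF alg lc_sub[OF alg, of i]]
    have cen: "centralizes A F (A \<times> A) (lower_central A F i) ?C" using cp(3) C by simp
    have t0': "t0 \<in> clo F (2 + 1)" using t0(1) by simp
    have v: "t0 [x, e, y] = t0 [x, e, y']" using eq t0(2)[of "[x,e,y]"] t0(2)[of "[x,e,y']"] xA yA y'A eA
      unfolding lmul_def by auto
    have "t0 [x, e, y] \<in> A" using t0(2)[of "[x,e,y]"] mal_in xA yA eA by force
    then have "(t0 ([x, e] @ [y]), t0 ([x, e] @ [y'])) \<in> ?C" using v cp(2) C by auto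
    moreover have "list_all2 (\<lambda>a b. (a, b) \<in> A \<times> A) [x, e] [e, e]" using xA eA by simp
    moreover have "list_all2 (\<lambda>a b. (a, b) \<in> lower_central A F i) [y] [y']" using Suc by simp
    ultimately have "(t0 ([e, e] @ [y]), t0 ([e, e] @ [y'])) \<in> ?C"
      using cen t0' unfolding centralizes_def
      by (metis (no_types, lifting) length_Cons list.size(3) numeral_2_eq_2 One_nat_def)
    moreover have "t0 [e, e, y] = y" "t0 [e, e, y'] = y'"
      using t0(2)[of "[e,e,y]"] t0(2)[of "[e,e,y']"] lm_e_l[OF yA] lm_e_l[OF y'A] eA yA y'A
      unfolding lmul_def by auto
    ultimately show ?case by simp
  qed
  obtain n where n: "lower_central A F n = Id_on A" using nil unfolding nilpotent_def by blast
  have "(y, y') \<in> Id_on A" using all[of n] n by simp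
  then show ?thesis by auto
qed


definition sig :: "'a \<Rightarrow> 'a \<Rightarrow> 'a" where
  "sig x = (\<lambda>z. if z \<in> A then lmul mal e x z else z)"

lemma sig_perm: assumes xA: "x \<in> A" shows "permutation (sig x)"
proof -
  have inj: "inj_on (lmul mal e x) A" using lm_inj xA by (auto intro: inj_onI)
  have "lmul mal e x ` A \<subseteq> A" using lm_in xA by auto
  then have "lmul mal e x ` A = A" using endo_inj_surj[OF fin _ inj] by simp
  then have "bij_betw (lmul mal e x) A A" using inj by (simp add: bij_betw_def)
  then have "bij_betw (sig x) A A" by (rule bij_betw_cong[THEN iffD1, rotated]) (simp add: sig_def)
  then have "sig x permutes A" by (rule bij_imp_permutes) (simp add: sig_def)
  then show ?thesis using fin permutation_permutes by blast
qed

definition K :: nat where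
  "K = (\<Prod>x\<in>A. (SOME n. n > 0 \<and> sig x ^^ n = id))"

lemma K_props: "K > 0" "x \<in> A \<Longrightarrow> sig x ^^ K = id"
proof -
  define N where "N x = (SOME n. n > 0 \<and> sig x ^^ n = id)" for x
  have N: "N x > 0 \<and> sig x ^^ N x = id" if xA: "x \<in> A" for x
  proof -
    have pp: "permutation (sig x)" using sig_perm[OF xA] .
    obtain n where "sig x ^^ n = id" "n > 0" using permutation_is_nilpotent[OF pp] by blast
    then have "\<exists>n. n > 0 \<and> sig x ^^ n = id" by blast
    from someI_ex[OF this] show ?thesis unfolding N_def .
  qed
  have KN: "K = (\<Prod>x\<in>A. N x)" unfolding K_def N_def ..
  show "K > 0" unfolding KN using N fin by (simp add: prod_pos)
  assume xA: "x \<in> A"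
  have "K = N x * (\<Prod>y\<in>A - {x}. N y)" unfolding KN using prod.remove[OF fin xA] by simp
  then have "sig x ^^ K = (sig x ^^ N x) ^^ (\<Prod>y\<in>A - {x}. N y)" by (simp add: funpow_mult)
  also have "\<dots> = id" using N[OF xA] by (simp add: id_funpow)
  finally show "sig x ^^ K = id" .
qed

lemma sig_pow: "x \<in> A \<Longrightarrow> y \<in> A \<Longrightarrow> (sig x ^^ j) y = (lmul mal e x ^^ j) y \<and> (lmul mal e x ^^ j) y \<in> A"
  by (induction j) (auto simp: sig_def lm_in)

lemma ldiv_eq:
  assumes xA: "x \<in> A" and yA: "y \<in> A"
  shows "ldiv A mal e x y = (lmul mal e x ^^ (K - 1)) y"
    "ldiv A mal e x y \<in> A" "lmul mal e x (ldiv A mal e x y) = y"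
proof -
  let ?z = "(lmul mal e x ^^ (K - 1)) y"
  have zA: "?z \<in> A" using sig_pow[OF xA yA] by blast
  have "lmul mal e x ?z = (lmul mal e x ^^ Suc (K - 1)) y" by simp
  also have "\<dots> = (lmul mal e x ^^ K) y" using K_props(1) by simp
  also have "\<dots> = y" using sig_pow[OF xA yA, of K] K_props(2)[OF xA] by simp
  finally have z: "lmul mal e x ?z = y" .
  have "ldiv A mal e x y = ?z" unfolding ldiv_def
    by (rule the_equality) (use zA z lm_inj[OF xA] in auto)
  then show "ldiv A mal e x y = ?z" "ldiv A mal e x y \<in> A" "lmul mal e x (ldiv A mal e x y) = y"
    using zA z by auto
qed

lemma ldiv_lm: "x \<in> A \<Longrightarrow> z \<in> A \<Longrightarrow> ldiv A mal e x (lmul mal e x z) = z"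
  using ldiv_eq(2,3)[of x "lmul mal e x z"] lm_in lm_inj by blast

lemma ldiv_self: "x \<in> A \<Longrightarrow> ldiv A mal e x x = e"
  using ldiv_lm[of x e] lm_e_r eA by simp

lemma pow_pol: "is_pol A F 2 (\<lambda>xs. (lmul mal e (xs ! 0) ^^ j) (xs ! 1))"
proof (induction j)
  case 0 then show ?case using is_pol_proj[of 1 2] by simp
next
  case (Suc j)
  have "is_pol A F 2 (\<lambda>xs. mal (map (\<lambda>p. p xs) [\<lambda>xs. xs ! 0, \<lambda>xs. e, \<lambda>xs. (lmul mal e (xs ! 0) ^^ j) (xs ! 1)]))"
    by (rule is_pol_compose[OF alg mal_pol]) (use Suc is_pol_proj[of 0 2] is_pol_const[OF eA] in auto)
  moreover have "lmul mal e x = (\<lambda>z. mal [x, e, z])" for x by (rule ext) (simp add: lmul_def)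
  ultimately show ?case by (simp add: lmul_def)
qed

lemma ldiv_pol: "is_pol A F 2 (\<lambda>xs. ldiv A mal e (xs ! 0) (xs ! 1))"
proof (rule is_pol_cong[OF pow_pol[of "K - 1"]])
  fix xs :: "'a list" assume "length xs = 2" "set xs \<subseteq> A"
  then have "xs ! 0 \<in> A" "xs ! 1 \<in> A" using nth_mem[of 0 xs] nth_mem[of 1 xs] by auto
  then show "ldiv A mal e (xs ! 0) (xs ! 1) = (lmul mal e (xs ! 0) ^^ (K - 1)) (xs ! 1)"
    by (rule ldiv_eq(1))
qed

lemma lm_pol: "is_pol A F 2 (\<lambda>xs. lmul mal e (xs ! 0) (xs ! 1))"
proof -
  have "is_pol A F 2 (\<lambda>xs. mal (map (\<lambda>p. p xs) [\<lambda>xs. xs ! 0, \<lambda>xs. e, \<lambda>xs. xs ! 1]))"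
    by (rule is_pol_compose[OF alg mal_pol]) (use is_pol_proj[of 0 2] is_pol_proj[of 1 2] is_pol_const[OF eA] in auto)
  then show ?thesis by (simp add: lmul_def)
qed



lemma is_pol_lm2: "is_pol A F k P \<Longrightarrow> is_pol A F k Q \<Longrightarrow> is_pol A F k (\<lambda>xs. lmul mal e (P xs) (Q xs))"
  using is_pol_compose[OF alg lm_pol, of "[P, Q]" k] by simp

lemma is_pol_ldiv2: "is_pol A F k P \<Longrightarrow> is_pol A F k Q \<Longrightarrow> is_pol A F k (\<lambda>xs. ldiv A mal e (P xs) (Q xs))"
  using is_pol_compose[OF alg ldiv_pol, of "[P, Q]" k] by simp

lemma prodL_snoc: "prodL mal e (xs @ [y]) = lmul mal e (prodL mal e xs) y"
  unfolding prodL_def by simp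

lemma foldl_in: "acc \<in> A \<Longrightarrow> set xs \<subseteq> A \<Longrightarrow> foldl (lmul mal e) acc xs \<in> A"
  by (induction xs arbitrary: acc) (auto simp: lm_in)

lemma prodL_in: "set xs \<subseteq> A \<Longrightarrow> prodL mal e xs \<in> A"
  unfolding prodL_def using foldl_in eA by blast

lemma foldl_alle: "acc \<in> A \<Longrightarrow> \<forall>x\<in>set xs. x = e \<Longrightarrow> foldl (lmul mal e) acc xs = acc"
  by (induction xs arbitrary: acc) (auto simp: lm_e_r)

lemma prodL_alle: "\<forall>x\<in>set xs. x = e \<Longrightarrow> prodL mal e xs = e"
  unfolding prodL_def using foldl_alle eA by blast

lemma foldl_single:
  "acc \<in> A \<Longrightarrow> distinct L \<Longrightarrow> \<forall>S\<in>set L. g S \<in> A \<Longrightarrow> \<forall>S\<in>set L. S \<noteq> S0 \<longrightarrow> g S = e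
   \<Longrightarrow> foldl (lmul mal e) acc (map g L) = (if S0 \<in> set L then lmul mal e acc (g S0) else acc)"
proof (induction L arbitrary: acc)
  case Nil then show ?case by simp
next
  case (Cons S L)
  show ?case
  proof (cases "S = S0")
    case True
    have "lmul mal e acc (g S0) \<in> A" using Cons True lm_in by auto
    moreover have "\<forall>x\<in>set (map g L). x = e" using Cons True by auto
    ultimately show ?thesis using True foldl_alle by simp
  next
    case False
    then have "g S = e" using Cons by simp
    then have "lmul mal e acc (g S) = acc" using lm_e_r Cons by simp
    then show ?thesis using Cons False by simp
  qed
qed

lemma prodL_single:
  "distinct L \<Longrightarrow> \<forall>S\<in>set L. g S \<in> A \<Longrightarrow> \<forall>S\<in>set L. S \<noteq> S0 \<longrightarrow> g S = e
   \<Longrightarrow> prodL mal e (map g L) = (if S0 \<in> set L then g S0 else e)"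
  unfolding prodL_def using foldl_single[OF eA, of L g S0] lm_e_l by auto

lemma is_pol_prodL: "\<forall>p\<in>set ps. is_pol A F k p \<Longrightarrow> is_pol A F k (\<lambda>xs. prodL mal e (map (\<lambda>p. p xs) ps))"
proof (induction ps rule: rev_induct)
  case Nil then show ?case using is_pol_const[OF eA] by (simp add: prodL_def)
next
  case (snoc p ps)
  then have "is_pol A F k (\<lambda>xs. lmul mal e (prodL mal e (map (\<lambda>p. p xs) ps)) (p xs))"
    by (intro is_pol_lm2) auto
  then show ?case by (simp add: prodL_snoc)
qed


end


locale constr = nilp +
  fixes f :: "'a list \<Rightarrow> 'a" and m :: nat and as :: "'a list" and b :: "'a list"
    and ordS :: "nat \<Rightarrow> nat set list"
  assumes fpol: "is_pol A F m f" and das: "distinct as" and sas: "set as = A"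
    and lb: "length b = m" and sb: "set b \<subseteq> A"
    and oS: "\<forall>k. distinct (ordS k) \<and> set (ordS k) = {S. S \<subseteq> {0..<m} \<and> card S = Suc k}"
begin

abbreviation "R k \<equiv> rlist A mal e f m as b ordS k"
abbreviation "rr' i \<equiv> rr A mal e f m as b ordS i"
abbreviation "T k S \<equiv> tfun A mal e f m (R k) S"
definition "P k z = prodL mal e (map (\<lambda>i. rr' i z) [0..<Suc k])"

lemma rlist_eq: "R k = map rr' [0..<Suc k]"
proof (induction k)
  case 0 then show ?case by (simp add: rr_def)
next
  case (Suc k)
  let ?X = "\<lambda>xs. prodL mal e
               (map (\<lambda>a. prodL mal e
                   (map (\<lambda>S. tfun A mal e f m (R k) S (restr S xs))
                      (filter (\<lambda>S. tfun A mal e f m (R k) S (restr S b) = a) (ordS k))))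
                 as)"
  have RS: "R (Suc k) = R k @ [?X]" by (simp add: Let_def)
  have lR: "length (R k) = Suc k" using Suc by simp
  have "rr' (Suc k) = ?X" unfolding rr_def RS using lR by (simp add: nth_append)
  then show ?case using RS Suc by simp
qed

lemma rr_Suc: "rr' (Suc k) xs = prodL mal e
               (map (\<lambda>a. prodL mal e
                   (map (\<lambda>S. T k S (restr S xs))
                      (filter (\<lambda>S. T k S (restr S b) = a) (ordS k))))
                 as)"
proof -
  have lR: "length (R k) = Suc k" using rlist_eq by simp
  show ?thesis unfolding rr_def by (simp add: Let_def nth_append lR)
qed

lemma rr0: "rr' 0 = (\<lambda>xs. f (replicate m e))"
  by (simp add: rr_def)

lemma T_eq: "T k S ys = ldiv A mal e (P k (spread m e S ys)) (f (spread m e S ys))"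
  unfolding tfun_def P_def rlist_eq by (simp add: comp_def)

lemma spread_pol:
  assumes S: "S \<subseteq> {0..<m}" and p: "is_pol A F m p"
  shows "is_pol A F (card S) (\<lambda>ys. p (spread m e S ys))"
proof -
  let ?qs = "map (\<lambda>i. if i \<in> S then (\<lambda>ys. ys ! card {j \<in> S. j < i}) else (\<lambda>ys. e)) [0..<m]"
  have "is_pol A F (card S) (\<lambda>ys. p (map (\<lambda>q. q ys) ?qs))"
  proof (rule is_pol_compose[OF alg p])
    show "length ?qs = m" by simp
    show "\<forall>q\<in>set ?qs. is_pol A F (card S) q"
    proof
      fix q assume "q \<in> set ?qs"
      then obtain i where i: "i \<in> set [0..<m]" "q = (if i \<in> S then (\<lambda>ys. ys ! card {j \<in> S. j < i}) else (\<lambda>ys. e))"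
        by auto
      show "is_pol A F (card S) q"
      proof (cases "i \<in> S")
        case True
        then have "card {j \<in> S. j < i} < card S" using idx_inv[OF fin_sub[OF S]] by blast
        then show ?thesis using i True is_pol_proj by simp
      next
        case False
        then show ?thesis using i is_pol_const[OF eA] by simp
      qed
    qed
  qed
  moreover have "map (\<lambda>q. q ys) ?qs = spread m e S ys" for ys
    unfolding spread_def by simp
  ultimately show ?thesis by simp
qed

lemma restr_pol:
  assumes S: "S \<subseteq> {0..<m}" and p: "is_pol A F (card S) p"
  shows "is_pol A F m (\<lambda>xs. p (restr S xs))"
proof -
  let ?qs = "map (\<lambda>i (xs::'a list). xs ! i) (sorted_list_of_set S)"
  have "is_pol A F m (\<lambda>xs. p (map (\<lambda>q. q xs) ?qs))"
  proof (rule is_pol_compose[OF alg p])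
    show "length ?qs = card S" by simp
    show "\<forall>q\<in>set ?qs. is_pol A F m q"
    proof
      fix q assume "q \<in> set ?qs"
      then obtain i where i: "i \<in> S" "q = (\<lambda>xs. xs ! i)" using fin_sub[OF S] by auto
      then have "i < m" using S by auto
      then show "is_pol A F m q" using i is_pol_proj by simp
    qed
  qed
  moreover have "map (\<lambda>q. q xs) ?qs = restr S xs" for xs
    unfolding restr_def by simp
  ultimately show ?thesis by simp
qed


lemma P_pol: "\<forall>i\<le>k. is_pol A F m (rr' i) \<Longrightarrow> is_pol A F m (P k)"
proof -
  assume a: "\<forall>i\<le>k. is_pol A F m (rr' i)"
  have "is_pol A F m (\<lambda>z. prodL mal e (map (\<lambda>p. p z) (map rr' [0..<Suc k])))"
    by (rule is_pol_prodL) (use a in auto)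
  moreover have "P k = (\<lambda>z. prodL mal e (map (\<lambda>p. p z) (map rr' [0..<Suc k])))"
    unfolding P_def by (simp add: comp_def)
  ultimately show ?thesis by simp
qed

lemma P_Suc: "P (Suc k) z = lmul mal e (P k z) (rr' (Suc k) z)"
  unfolding P_def prodL_def by simp

lemma set_restr_A:
  assumes S: "S \<subseteq> {0..<m}" and l: "length z = m" and zA: "set z \<subseteq> A"
  shows "set (restr S z) \<subseteq> A"
proof
  fix y assume "y \<in> set (restr S z)"
  moreover have eq: "set (restr S z) = (\<lambda>i. z ! i) ` S" by (rule set_restr[OF fin_sub[OF S]])
  ultimately have "y \<in> (\<lambda>i. z ! i) ` S" by simp
  then obtain i where i: "i \<in> S" "y = z ! i" by (rule imageE) simp
  then have "i < length z" using S l by auto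
  then have "z ! i \<in> set z" by (rule nth_mem)
  then show "y \<in> A" using i zA by auto
qed

lemma T_props:
  assumes pi: "\<forall>i\<le>k. is_pol A F m (rr' i)"
    and pii: "\<forall>S. S \<subseteq> {0..<m} \<longrightarrow> card S \<le> k \<longrightarrow> (\<forall>xs. length xs = m \<longrightarrow> set xs \<subseteq> A \<longrightarrow>
               f (sub0 m e S xs) = P k (sub0 m e S xs))"
    and S: "S \<subseteq> {0..<m}" "card S = Suc k"
  shows "is_pol A F (Suc k) (T k S) \<and> zero_absorbing A e (Suc k) (T k S)"
proof
  have Pp: "is_pol A F m (P k)" using P_pol pi by blast
  have "is_pol A F (card S) (\<lambda>ys. ldiv A mal e (P k (spread m e S ys)) (f (spread m e S ys)))"
    by (rule is_pol_ldiv2) (use spread_pol[OF S(1)] Pp fpol in auto)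
  moreover have "T k S = (\<lambda>ys. ldiv A mal e (P k (spread m e S ys)) (f (spread m e S ys)))"
    by (rule ext) (rule T_eq)
  ultimately show "is_pol A F (Suc k) (T k S)" using S(2) by simp
  show "zero_absorbing A e (Suc k) (T k S)"
    unfolding zero_absorbing_def
  proof (intro allI impI)
    fix ys assume ly: "length ys = Suc k" and yA: "set ys \<subseteq> A" and ey: "e \<in> set ys"
    let ?z = "spread m e S ys"
    have zA: "set ?z \<subseteq> A" using set_spread[OF yA _ fin_sub[OF S(1)] eA] ly S(2) by simp
    have lz: "length ?z = m" by simp
    have "restr S ?z = ys" using restr_spread[OF S(1)] ly S(2) by simp
    moreover have "set (restr S ?z) = (\<lambda>i. ?z ! i) ` S" by (rule set_restr[OF fin_sub[OF S(1)]])
    ultimately have "e \<in> (\<lambda>i. ?z ! i) ` S" using ey by simp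
    then obtain i0 where i0: "i0 \<in> S" "?z ! i0 = e" by auto
    define S' where "S' = {i \<in> S. ?z ! i \<noteq> e}"
    have S'S: "S' \<subseteq> S - {i0}" using i0 unfolding S'_def by auto
    have "card S' \<le> card (S - {i0})" using S'S fin_sub[OF S(1)] by (intro card_mono) auto
    then have cS': "card S' \<le> k" using i0 S(2) fin_sub[OF S(1)] by simp
    have S'm: "S' \<subseteq> {0..<m}" using S(1) unfolding S'_def by auto
    have zz: "sub0 m e S' ?z = ?z"
    proof (rule nth_equalityI)
      fix i assume "i < length (sub0 m e S' ?z)"
      then have im: "i < m" by simp
      show "sub0 m e S' ?z ! i = ?z ! i"
        using im by (cases "i \<in> S") (auto simp: nth_sub0 S'_def nth_spread)
    qed simp
    have "f (sub0 m e S' ?z) = P k (sub0 m e S' ?z)" using pii S'm cS' lz zA by blast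
    then have "f ?z = P k ?z" by (simp only: zz)
    moreover have "P k ?z \<in> A" using is_pol_in_A[OF alg Pp lz zA] .
    ultimately show "T k S ys = e" using T_eq ldiv_self by simp
  qed
qed

lemma rr_Suc_sub0:
  assumes absorb: "\<forall>S'. S' \<subseteq> {0..<m} \<longrightarrow> card S' = Suc k \<longrightarrow>
          is_pol A F (Suc k) (T k S') \<and> zero_absorbing A e (Suc k) (T k S')"
    and S: "S \<subseteq> {0..<m}" "card S \<le> Suc k" and lx: "length xs = m" and xA: "set xs \<subseteq> A"
  shows "rr' (Suc k) (sub0 m e S xs) = (if card S = Suc k then T k S (restr S (sub0 m e S xs)) else e)"
proof -
  define z where "z = sub0 m e S xs"
  have zA: "set z \<subseteq> A" unfolding z_def using set_sub0[OF xA lx eA] .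
  have lz: "length z = m" unfolding z_def by simp
  define g where "g S' = T k S' (restr S' z)" for S'
  have oSk: "set (ordS k) = {S. S \<subseteq> {0..<m} \<and> card S = Suc k}" "distinct (ordS k)" using oS by auto
  have gA: "g S' \<in> A" if "S' \<in> set (ordS k)" for S'
  proof -
    have S': "S' \<subseteq> {0..<m}" "card S' = Suc k" using that oSk by auto
    show ?thesis unfolding g_def
      using is_pol_in_A[OF alg conjunct1[OF absorb[rule_format, OF S']] _ set_restr_A[OF S'(1) lz zA]] S'(2) by simp
  qed
  have ge: "g S' = e" if "S' \<in> set (ordS k)" "S' \<noteq> S" for S'
  proof -
    have S': "S' \<subseteq> {0..<m}" "card S' = Suc k" using that oSk by auto
    have "\<not> S' \<subseteq> S"
    proof
      assume sub: "S' \<subseteq> S"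
      then have "card S' \<le> card S" using fin_sub[OF S(1)] by (rule card_mono[rotated])
      then have "card S' = card S" using S S' by simp
      then show False using card_subset_eq[OF fin_sub[OF S(1)] sub] that(2) by simp
    qed
    then obtain i where i: "i \<in> S'" "i \<notin> S" by auto
    then have "i < m" using S' by auto
    then have "z ! i = e" using i unfolding z_def by (simp add: nth_sub0)
    moreover have "set (restr S' z) = (\<lambda>i. z ! i) ` S'" by (rule set_restr[OF fin_sub[OF S'(1)]])
    ultimately have "e \<in> set (restr S' z)" using i by force
    then show ?thesis unfolding g_def
      using absorb[rule_format, OF S'] set_restr_A[OF S'(1) lz zA] S'(2)
      unfolding zero_absorbing_def by simp
  qed
  define h where "h a = prodL mal e (map (\<lambda>S. T k S (restr S z)) (filter (\<lambda>S. T k S (restr S b) = a) (ordS k)))" for a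
  have rz: "rr' (Suc k) z = prodL mal e (map h as)" unfolding h_def by (rule rr_Suc)
  have h: "h a = (if S \<in> set (ordS k) \<and> T k S (restr S b) = a then g S else e)" for a
  proof -
    have "h a = prodL mal e (map g (filter (\<lambda>S. T k S (restr S b) = a) (ordS k)))"
      unfolding h_def g_def ..
    also have "\<dots> = (if S \<in> set (filter (\<lambda>S. T k S (restr S b) = a) (ordS k)) then g S else e)"
      by (rule prodL_single) (use oSk gA ge in auto)
    finally show ?thesis by simp
  qed
  show ?thesis
  proof (cases "card S = Suc k")
    case True
    then have Sin: "S \<in> set (ordS k)" using oSk S by auto
    let ?a0 = "T k S (restr S b)"
    have a0A: "?a0 \<in> A"
      using is_pol_in_A[OF alg conjunct1[OF absorb[rule_format, OF S(1) True]] _ set_restr_A[OF S(1) lb sb]] True by simp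
    have "prodL mal e (map h as) = (if ?a0 \<in> set as then h ?a0 else e)"
      by (rule prodL_single) (use das h gA Sin eA in auto)
    then have "rr' (Suc k) z = g S" using rz sas a0A h Sin by simp
    then show ?thesis using True unfolding g_def z_def by simp
  next
    case False
    then have "S \<notin> set (ordS k)" using oSk by auto
    then have "\<forall>x\<in>set (map h as). x = e" using h by auto
    then show ?thesis using rz False prodL_alle unfolding z_def by simp
  qed
qed



lemma sub0_empty: "sub0 m e {} xs = replicate m e"
  by (rule nth_equalityI) (simp_all add: nth_sub0)

lemma H:
  "(\<forall>i\<le>k. is_pol A F m (rr' i))
   \<and> (\<forall>S. S \<subseteq> {0..<m} \<longrightarrow> card S \<le> k \<longrightarrow> (\<forall>xs. length xs = m \<longrightarrow> set xs \<subseteq> A \<longrightarrow>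
               f (sub0 m e S xs) = P k (sub0 m e S xs)))
   \<and> (\<forall>j<k. \<forall>S. S \<subseteq> {0..<m} \<longrightarrow> card S = Suc j \<longrightarrow>
         is_pol A F (Suc j) (T j S) \<and> zero_absorbing A e (Suc j) (T j S))"
proof (induction k)
  case 0
  have "set (replicate m e) \<subseteq> A" using eA by (cases m) auto
  then have fr: "f (replicate m e) \<in> A" using is_pol_in_A[OF alg fpol, of "replicate m e"] by simp
  have p0: "is_pol A F m (rr' 0)" unfolding rr0 using is_pol_const[OF fr] .
  have "f (sub0 m e S xs) = P 0 (sub0 m e S xs)" if "S \<subseteq> {0..<m}" "card S \<le> 0" for S xs
  proof -
    have "S = {}" using that fin_sub[OF that(1)] by simp
    then show ?thesis using fr by (simp add: sub0_empty P_def prodL_def rr0 lm_e_l)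
  qed
  then show ?case using p0 by auto
next
  case (Suc k)
  have pi: "\<forall>i\<le>k. is_pol A F m (rr' i)" using Suc by blast
  have pii: "\<forall>S. S \<subseteq> {0..<m} \<longrightarrow> card S \<le> k \<longrightarrow> (\<forall>xs. length xs = m \<longrightarrow> set xs \<subseteq> A \<longrightarrow>
               f (sub0 m e S xs) = P k (sub0 m e S xs))" using Suc by blast
  have piii: "\<forall>j<k. \<forall>S. S \<subseteq> {0..<m} \<longrightarrow> card S = Suc j \<longrightarrow>
         is_pol A F (Suc j) (T j S) \<and> zero_absorbing A e (Suc j) (T j S)" using Suc by blast
  have Tk: "\<forall>S. S \<subseteq> {0..<m} \<longrightarrow> card S = Suc k \<longrightarrow>
         is_pol A F (Suc k) (T k S) \<and> zero_absorbing A e (Suc k) (T k S)"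
    using T_props[OF pi pii] by blast
  have Pp: "is_pol A F m (P k)" using P_pol pi by blast
  have n3: "\<forall>j<Suc k. \<forall>S. S \<subseteq> {0..<m} \<longrightarrow> card S = Suc j \<longrightarrow>
         is_pol A F (Suc j) (T j S) \<and> zero_absorbing A e (Suc j) (T j S)"
    using piii Tk less_Suc_eq by auto
  have inner: "is_pol A F m (\<lambda>xs. T k S (restr S xs))" if "S \<in> set (ordS k)" for S
  proof -
    have S: "S \<subseteq> {0..<m}" "card S = Suc k" using that oS by auto
    show ?thesis by (rule restr_pol[OF S(1)]) (use Tk S in auto)
  qed
  have "is_pol A F m (\<lambda>xs. prodL mal e (map (\<lambda>p. p xs)
          (map (\<lambda>a xs. prodL mal e (map (\<lambda>p. p xs) (map (\<lambda>S xs. T k S (restr S xs))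
                 (filter (\<lambda>S. T k S (restr S b) = a) (ordS k))))) as)))"
  proof (rule is_pol_prodL, rule ballI)
    fix p assume "p \<in> set (map (\<lambda>a xs. prodL mal e (map (\<lambda>p. p xs) (map (\<lambda>S xs. T k S (restr S xs))
                 (filter (\<lambda>S. T k S (restr S b) = a) (ordS k))))) as)"
    then obtain a where p: "p = (\<lambda>xs. prodL mal e (map (\<lambda>p. p xs) (map (\<lambda>S xs. T k S (restr S xs))
                 (filter (\<lambda>S. T k S (restr S b) = a) (ordS k)))))" by auto
    have "is_pol A F m (\<lambda>xs. prodL mal e (map (\<lambda>p. p xs) (map (\<lambda>S xs. T k S (restr S xs))
                 (filter (\<lambda>S. T k S (restr S b) = a) (ordS k)))))"
      by (rule is_pol_prodL) (use inner in auto)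
    then show "is_pol A F m p" using p by simp
  qed
  moreover have "rr' (Suc k) = (\<lambda>xs. prodL mal e (map (\<lambda>p. p xs)
          (map (\<lambda>a xs. prodL mal e (map (\<lambda>p. p xs) (map (\<lambda>S xs. T k S (restr S xs))
                 (filter (\<lambda>S. T k S (restr S b) = a) (ordS k))))) as)))"
    by (rule ext) (simp add: rr_Suc comp_def)
  ultimately have pS: "is_pol A F m (rr' (Suc k))" by simp
  have n1: "\<forall>i\<le>Suc k. is_pol A F m (rr' i)" using pi pS le_Suc_eq by auto
  have n2: "f (sub0 m e S xs) = P (Suc k) (sub0 m e S xs)"
    if S: "S \<subseteq> {0..<m}" "card S \<le> Suc k" and lx: "length xs = m" and xA: "set xs \<subseteq> A" for S xs
  proof -
    define z where "z = sub0 m e S xs"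
    have zA: "set z \<subseteq> A" unfolding z_def using set_sub0[OF xA lx eA] .
    have lz: "length z = m" unfolding z_def by simp
    have PA: "P k z \<in> A" using is_pol_in_A[OF alg Pp lz zA] .
    have fA: "f z \<in> A" using is_pol_in_A[OF alg fpol lz zA] .
    have rz: "rr' (Suc k) z = (if card S = Suc k then T k S (restr S z) else e)"
      unfolding z_def by (rule rr_Suc_sub0[OF Tk S lx xA])
    show ?thesis
    proof (cases "card S = Suc k")
      case True
      have "spread m e S (restr S z) = sub0 m e S z" by (rule spread_restr[OF S(1)])
      also have "\<dots> = z" unfolding z_def using sub0_sub0[OF lx] by simp
      finally have sz: "spread m e S (restr S z) = z" .
      have "rr' (Suc k) z = ldiv A mal e (P k z) (f z)" using rz True T_eq sz by simp
      then have "P (Suc k) z = f z" using P_Suc ldiv_eq(3)[OF PA fA] by simp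
      then show ?thesis unfolding z_def by simp
    next
      case False
      then have "card S \<le> k" using S by simp
      then have "f z = P k z" unfolding z_def using pii S lx xA by blast
      moreover have "P (Suc k) z = P k z" using P_Suc rz False lm_e_r[OF PA] by simp
      ultimately show ?thesis unfolding z_def by simp
    qed
  qed
  show ?case using n1 n2 n3 by blast
qed



lemma final:
  "(\<forall>S \<subseteq> {0..<m}. is_pol A F (card S) (tt A mal e f m as b ordS S)
                      \<and> zero_absorbing A e (card S) (tt A mal e f m as b ordS S))
   \<and> (\<forall>S \<subseteq> {0..<m}. \<forall>xs. length xs = m \<longrightarrow> set xs \<subseteq> A \<longrightarrow>
        f (sub0 m e S xs) =
          prodL mal e (map (\<lambda>i. rr A mal e f m as b ordS i (sub0 m e S xs)) [0..<Suc (card S)]))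
   \<and> (\<forall>xs. length xs = m \<longrightarrow> set xs \<subseteq> A \<longrightarrow>
        f xs = prodL mal e (map (\<lambda>i. rr A mal e f m as b ordS i xs) [0..<Suc m]))
   \<and> (\<forall>n > 0. (\<forall>k \<ge> n. \<forall>p. is_pol A F k p \<longrightarrow> zero_absorbing A e k p \<longrightarrow>
                   (\<forall>xs. length xs = k \<longrightarrow> set xs \<subseteq> A \<longrightarrow> p xs = e))
        \<longrightarrow> (\<forall>k. n \<le> k \<longrightarrow> k \<le> m \<longrightarrow>
               (\<forall>xs. length xs = m \<longrightarrow> set xs \<subseteq> A \<longrightarrow> rr A mal e f m as b ordS k xs = e)))"
proof (intro conjI)
  show "\<forall>S \<subseteq> {0..<m}. is_pol A F (card S) (tt A mal e f m as b ordS S)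
                      \<and> zero_absorbing A e (card S) (tt A mal e f m as b ordS S)"
  proof (intro allI impI)
    fix S assume S: "S \<subseteq> {0..<m}"
    show "is_pol A F (card S) (tt A mal e f m as b ordS S) \<and> zero_absorbing A e (card S) (tt A mal e f m as b ordS S)"
    proof (cases "S = {}")
      case True
      then show ?thesis using is_pol_const[OF eA] by (simp add: tt_def zero_absorbing_def)
    next
      case False
      then obtain j where j: "card S = Suc j" using fin_sub[OF S] by (metis card_0_eq not0_implies_Suc)
      have tt: "tt A mal e f m as b ordS S = T j S" using False j by (simp add: tt_def)
      have "is_pol A F (Suc j) (T j S) \<and> zero_absorbing A e (Suc j) (T j S)"
        using conjunct2[OF conjunct2[OF H[of "Suc j"]]] S j by blast
      then show ?thesis using tt j by simp
    qed
  qed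
  have two: "f (sub0 m e S xs) = prodL mal e (map (\<lambda>i. rr' i (sub0 m e S xs)) [0..<Suc (card S)])"
    if "S \<subseteq> {0..<m}" "length xs = m" "set xs \<subseteq> A" for S xs
  proof -
    have "f (sub0 m e S xs) = P (card S) (sub0 m e S xs)"
      using conjunct1[OF conjunct2[OF H[of "card S"]]] that by blast
    then show ?thesis unfolding P_def .
  qed
  then show "\<forall>S \<subseteq> {0..<m}. \<forall>xs. length xs = m \<longrightarrow> set xs \<subseteq> A \<longrightarrow>
        f (sub0 m e S xs) = prodL mal e (map (\<lambda>i. rr' i (sub0 m e S xs)) [0..<Suc (card S)])" by blast
  show "\<forall>xs. length xs = m \<longrightarrow> set xs \<subseteq> A \<longrightarrow>
        f xs = prodL mal e (map (\<lambda>i. rr' i xs) [0..<Suc m])"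
  proof (intro allI impI)
    fix xs :: "'a list" assume lx: "length xs = m" and xA: "set xs \<subseteq> A"
    have "f (sub0 m e {0..<m} xs) = prodL mal e (map (\<lambda>i. rr' i (sub0 m e {0..<m} xs)) [0..<Suc (card {0..<m})])"
      using two[of "{0..<m}" xs] lx xA by simp
    then show "f xs = prodL mal e (map (\<lambda>i. rr' i xs) [0..<Suc m])" using sub0_full[OF lx] by simp
  qed
  show "\<forall>n > 0. (\<forall>k \<ge> n. \<forall>p. is_pol A F k p \<longrightarrow> zero_absorbing A e k p \<longrightarrow>
                   (\<forall>xs. length xs = k \<longrightarrow> set xs \<subseteq> A \<longrightarrow> p xs = e))
        \<longrightarrow> (\<forall>k. n \<le> k \<longrightarrow> k \<le> m \<longrightarrow>
               (\<forall>xs. length xs = m \<longrightarrow> set xs \<subseteq> A \<longrightarrow> rr' k xs = e))"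
  proof (intro allI impI)
    fix n k xs
    assume n: "n > 0" and hyp: "\<forall>k \<ge> n. \<forall>p. is_pol A F k p \<longrightarrow> zero_absorbing A e k p \<longrightarrow>
                   (\<forall>xs. length xs = k \<longrightarrow> set xs \<subseteq> A \<longrightarrow> p xs = e)"
      and k: "n \<le> k" "k \<le> m" and lx: "length xs = m" and xA: "set xs \<subseteq> A"
    have "k \<noteq> 0" using n k by simp
    then obtain j where j: "k = Suc j" using not0_implies_Suc by blast
    have Tj0: "\<forall>j'<Suc j. \<forall>S. S \<subseteq> {0..<m} \<longrightarrow> card S = Suc j' \<longrightarrow>
         is_pol A F (Suc j') (T j' S) \<and> zero_absorbing A e (Suc j') (T j' S)"
      using conjunct2[OF conjunct2[OF H[of "Suc j"]]] .
    have Tj: "\<forall>S. S \<subseteq> {0..<m} \<longrightarrow> card S = Suc j \<longrightarrow>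
         is_pol A F (Suc j) (T j S) \<and> zero_absorbing A e (Suc j) (T j S)" using Tj0 by blast
    have te: "T j S (restr S xs) = e" if "S \<in> set (ordS j)" for S
    proof -
      have S: "S \<subseteq> {0..<m}" "card S = Suc j" using that oS by auto
      have "is_pol A F (Suc j) (T j S)" "zero_absorbing A e (Suc j) (T j S)" using Tj S by auto
      moreover have "length (restr S xs) = Suc j" "set (restr S xs) \<subseteq> A"
        using S set_restr_A[OF S(1) lx xA] by auto
      moreover have "Suc j \<ge> n" using k j by simp
      ultimately show ?thesis using hyp[rule_format, of "Suc j" "T j S" "restr S xs"] by blast
    qed
    have "\<forall>x\<in>set (map (\<lambda>a. prodL mal e (map (\<lambda>S. T j S (restr S xs))
                      (filter (\<lambda>S. T j S (restr S b) = a) (ordS j)))) as). x = e"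
    proof
      fix x assume "x \<in> set (map (\<lambda>a. prodL mal e (map (\<lambda>S. T j S (restr S xs))
                      (filter (\<lambda>S. T j S (restr S b) = a) (ordS j)))) as)"
      then obtain a where x: "x = prodL mal e (map (\<lambda>S. T j S (restr S xs))
                      (filter (\<lambda>S. T j S (restr S b) = a) (ordS j)))" by auto
      have "\<forall>y\<in>set (map (\<lambda>S. T j S (restr S xs)) (filter (\<lambda>S. T j S (restr S b) = a) (ordS j))). y = e"
        using te by auto
      then show "x = e" using x prodL_alle by simp
    qed
    then have "prodL mal e (map (\<lambda>a. prodL mal e (map (\<lambda>S. T j S (restr S xs))
                      (filter (\<lambda>S. T j S (restr S b) = a) (ordS j)))) as) = e" by (rule prodL_alle)
    then show "rr' k xs = e" using j rr_Suc[of j xs] by simp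
  qed
qed


end


theorem mainTheorem1:
  fixes A :: "'a set" and F :: "(nat \<times> ('a list \<Rightarrow> 'a)) set"
    and mal :: "'a list \<Rightarrow> 'a" and e :: 'a and f :: "'a list \<Rightarrow> 'a" and m :: nat
    and as :: "'a list" and b :: "'a list" and ordS :: "nat \<Rightarrow> nat set list"
  assumes "algebra A F" and "finite A" and "nilpotent A F" and "malcev_term A F mal"
    and "e \<in> A" and "is_pol A F m f"
    and "distinct as" and "set as = A"
    and "length b = m" and "set b \<subseteq> A"
    and "\<forall>k. distinct (ordS k) \<and> set (ordS k) = {S. S \<subseteq> {0..<m} \<and> card S = Suc k}"
  shows
    "(\<forall>S \<subseteq> {0..<m}. is_pol A F (card S) (tt A mal e f m as b ordS S)
                      \<and> zero_absorbing A e (card S) (tt A mal e f m as b ordS S))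
   \<and> (\<forall>S \<subseteq> {0..<m}. \<forall>xs. length xs = m \<longrightarrow> set xs \<subseteq> A \<longrightarrow>
        f (sub0 m e S xs) =
          prodL mal e (map (\<lambda>i. rr A mal e f m as b ordS i (sub0 m e S xs)) [0..<Suc (card S)]))
   \<and> (\<forall>xs. length xs = m \<longrightarrow> set xs \<subseteq> A \<longrightarrow>
        f xs = prodL mal e (map (\<lambda>i. rr A mal e f m as b ordS i xs) [0..<Suc m]))
   \<and> (\<forall>n > 0. (\<forall>k \<ge> n. \<forall>p. is_pol A F k p \<longrightarrow> zero_absorbing A e k p \<longrightarrow>
                   (\<forall>xs. length xs = k \<longrightarrow> set xs \<subseteq> A \<longrightarrow> p xs = e))
        \<longrightarrow> (\<forall>k. n \<le> k \<longrightarrow> k \<le> m \<longrightarrow>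
               (\<forall>xs. length xs = m \<longrightarrow> set xs \<subseteq> A \<longrightarrow> rr A mal e f m as b ordS k xs = e)))"
proof -
  interpret constr A F mal e f m as b ordS
    by unfold_locales (use assms in auto)
  show ?thesis by (rule final)
qed

end
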